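(* Let $L$ be a finite $\mathcal{L}$-lattice with $|L|\le n$. Then $L$ has the interpolation property iff every valid $a\le b$ with at most $n$ right variables has an interpolant, i.e. a formula $i$ whose variables are all intersection variables of $a,b$ such that $a\le i$ and $i\le b$ are valid.
   Context: A lattice-oriented signature $\mathcal{L}$ is a finite set of connectives. Each connective $c$ has an arity $n_c\in\mathbb{N}$ and a polarity $p_c:\{1,\dots,n_c\}\to\{-,+\}$. The signature contains binary connectives $\lor,\land,\to$ with $p_\lor(1)=p_\lor(2)=p_\land(1)=p_\land(2)=+$, $p_\to(1)=-$ and $p_\to(2)=+$; nullary connectives are truth constants. A finite $\mathcal{L}$-lattice is a finite set $L$ together with an $n_c$-ary operation $c^L$ on $L$ for each connective $c$, such that: - $(L,\lor^L,\land^L)$ is a lattice, with order $x\le y$ iff $x\land y=x$; its top element is denoted $1$; - $c^L$ is monotone in every argument $i$ with $p_c(i)=+$ and antitone in every argument $i$ with $p_c(i)=-$; - for all $a,b\in L$: $1\le a\to^L b$ iff $a\le b$. Formulas (words) are built from propositional variables using the connectives. A valuation assigns elements of $L$ to the variables and extends to all formulas via the operations $c^L$. For formulas $a,b$, "$a\le b$ is valid" means that the value of $a$ is $\le$ the value of $b$ under every valuation. For a valid $a\le b$, the variables occurring only in $a$ are the left variables, those occurring only in $b$ are the right variables, and those occurring in both are the intersection variables. $L$ has the interpolation property iff for all formulas $a,b$ with $a\le b$ valid there is a formula $i$ whose variables are all intersection variables of $a,b$ such that $a\le i$ and $i\le b$ are valid. If there are no intersection variables, $i$ must be a closed formula. 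*)

theory Defs
  imports Main
begin

datatype 'c form = Var nat | App 'c "'c form list"

fun fvars :: "'c form \<Rightarrow> nat set" where
  "fvars (Var x) = {x}"
| "fvars (App c fs) = (\<Union>f\<in>set fs. fvars f)"

fun wf_form :: "'c set \<Rightarrow> ('c \<Rightarrow> nat) \<Rightarrow> 'c form \<Rightarrow> bool" where
  "wf_form C ar (Var x) = True"
| "wf_form C ar (App c fs) = (c \<in> C \<and> length fs = ar c \<and> (\<forall>f\<in>set fs. wf_form C ar f))"

fun eval :: "('c \<Rightarrow> 'a list \<Rightarrow> 'a) \<Rightarrow> (nat \<Rightarrow> 'a) \<Rightarrow> 'c form \<Rightarrow> 'a" where
  "eval op v (Var x) = v x"
| "eval op v (App c fs) = op c (map (eval op v) fs)"

text \<open>Lattice-oriented signature: finite set C of connectives, arity ar, polarity pol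
  (pol c k = True means + for the argument with 0-based index k), containing
  distinct binary connectives jn (join), mt (meet), im (implication).\<close>
definition lsignature :: "'c set \<Rightarrow> ('c \<Rightarrow> nat) \<Rightarrow> ('c \<Rightarrow> nat \<Rightarrow> bool) \<Rightarrow> 'c \<Rightarrow> 'c \<Rightarrow> 'c \<Rightarrow> bool" where
  "lsignature C ar pol jn mt im \<longleftrightarrow>
     finite C \<and> jn \<in> C \<and> mt \<in> C \<and> im \<in> C \<and> distinct [jn, mt, im] \<and>
     ar jn = 2 \<and> ar mt = 2 \<and> ar im = 2 \<and>
     pol jn 0 \<and> pol jn 1 \<and> pol mt 0 \<and> pol mt 1 \<and> \<not> pol im 0 \<and> pol im 1"

definition lle :: "('c \<Rightarrow> 'a list \<Rightarrow> 'a) \<Rightarrow> 'c \<Rightarrow> 'a \<Rightarrow> 'a \<Rightarrow> bool" where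
  "lle op mt x y \<longleftrightarrow> op mt [x, y] = x"

definition is_lattice :: "'a set \<Rightarrow> ('c \<Rightarrow> 'a list \<Rightarrow> 'a) \<Rightarrow> 'c \<Rightarrow> 'c \<Rightarrow> bool" where
  "is_lattice L op jn mt \<longleftrightarrow>
     (\<forall>x\<in>L. \<forall>y\<in>L. op jn [x, y] = op jn [y, x] \<and> op mt [x, y] = op mt [y, x]) \<and>
     (\<forall>x\<in>L. \<forall>y\<in>L. \<forall>z\<in>L. op jn [op jn [x, y], z] = op jn [x, op jn [y, z]] \<and>
                           op mt [op mt [x, y], z] = op mt [x, op mt [y, z]]) \<and>
     (\<forall>x\<in>L. \<forall>y\<in>L. op jn [x, op mt [x, y]] = x \<and> op mt [x, op jn [x, y]] = x)"

definition is_top :: "'a set \<Rightarrow> ('c \<Rightarrow> 'a list \<Rightarrow> 'a) \<Rightarrow> 'c \<Rightarrow> 'a \<Rightarrow> bool" where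
  "is_top L op mt t \<longleftrightarrow> t \<in> L \<and> (\<forall>x\<in>L. lle op mt x t)"

definition finite_L_lattice ::
  "'c set \<Rightarrow> ('c \<Rightarrow> nat) \<Rightarrow> ('c \<Rightarrow> nat \<Rightarrow> bool) \<Rightarrow> 'c \<Rightarrow> 'c \<Rightarrow> 'c \<Rightarrow>
   'a set \<Rightarrow> ('c \<Rightarrow> 'a list \<Rightarrow> 'a) \<Rightarrow> bool" where
  "finite_L_lattice C ar pol jn mt im L op \<longleftrightarrow>
     lsignature C ar pol jn mt im \<and> finite L \<and> L \<noteq> {} \<and>
     (\<forall>c\<in>C. \<forall>xs. length xs = ar c \<and> set xs \<subseteq> L \<longrightarrow> op c xs \<in> L) \<and>
     is_lattice L op jn mt \<and>
     (\<forall>c\<in>C. \<forall>k<ar c. \<forall>xs ys.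
        length xs = ar c \<and> length ys = ar c \<and> set xs \<subseteq> L \<and> set ys \<subseteq> L \<and>
        (\<forall>l<ar c. l \<noteq> k \<longrightarrow> xs ! l = ys ! l) \<and> lle op mt (xs ! k) (ys ! k) \<longrightarrow>
        (if pol c k then lle op mt (op c xs) (op c ys) else lle op mt (op c ys) (op c xs))) \<and>
     (\<forall>t. is_top L op mt t \<longrightarrow>
        (\<forall>a\<in>L. \<forall>b\<in>L. lle op mt t (op im [a, b]) \<longleftrightarrow> lle op mt a b))"

definition valid_le :: "'a set \<Rightarrow> ('c \<Rightarrow> 'a list \<Rightarrow> 'a) \<Rightarrow> 'c \<Rightarrow> 'c form \<Rightarrow> 'c form \<Rightarrow> bool" where
  "valid_le L op mt a b \<longleftrightarrow>
     (\<forall>v. (\<forall>x. v x \<in> L) \<longrightarrow> lle op mt (eval op v a) (eval op v b))"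

definition right_vars :: "'c form \<Rightarrow> 'c form \<Rightarrow> nat set" where
  "right_vars a b = fvars b - fvars a"

definition is_interpolant ::
  "'c set \<Rightarrow> ('c \<Rightarrow> nat) \<Rightarrow> 'a set \<Rightarrow> ('c \<Rightarrow> 'a list \<Rightarrow> 'a) \<Rightarrow> 'c \<Rightarrow>
   'c form \<Rightarrow> 'c form \<Rightarrow> 'c form \<Rightarrow> bool" where
  "is_interpolant C ar L op mt a b i \<longleftrightarrow>
     wf_form C ar i \<and> fvars i \<subseteq> fvars a \<inter> fvars b \<and>
     valid_le L op mt a i \<and> valid_le L op mt i b"

definition interpolation_property ::
  "'c set \<Rightarrow> ('c \<Rightarrow> nat) \<Rightarrow> 'a set \<Rightarrow> ('c \<Rightarrow> 'a list \<Rightarrow> 'a) \<Rightarrow> 'c \<Rightarrow> bool" where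
  "interpolation_property C ar L op mt \<longleftrightarrow>
     (\<forall>a b. wf_form C ar a \<and> wf_form C ar b \<and> valid_le L op mt a b \<longrightarrow>
        (\<exists>i. is_interpolant C ar L op mt a b i))"

end

theory Submission
  imports Defs
begin

fun rn :: "(nat \<Rightarrow> nat) \<Rightarrow> 'c form \<Rightarrow> 'c form" where
  "rn r (Var x) = Var (r x)"
| "rn r (App c fs) = App c (map (rn r) fs)"

lemma eval_rn: "eval op v (rn r f) = eval op (v \<circ> r) f"
  by (induction f) (simp_all, metis (mono_tags, lifting) comp_apply map_eq_conv)

lemma fvars_rn: "fvars (rn r f) = r ` fvars f"
  by (induction f) auto

lemma wf_rn: "wf_form C ar f \<Longrightarrow> wf_form C ar (rn r f)"
  by (induction f) auto

lemma eval_cong: "(\<forall>x\<in>fvars f. v x = w x) \<Longrightarrow> eval op v f = eval op w f"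
  by (induction f) (simp_all, metis (no_types, lifting) UN_I map_eq_conv)

lemma finite_fvars: "finite (fvars f)"
  by (induction f) auto

lemma eval_in:
  assumes "finite_L_lattice C ar pol jn mt im L op" "\<forall>x. v x \<in> L"
  shows "wf_form C ar f \<Longrightarrow> eval op v f \<in> L"
proof (induction f)
  case (Var x) then show ?case using assms(2) by simp
next
  case (App c fs)
  have "c \<in> C" "length fs = ar c" using App.prems by auto
  moreover have "set (map (eval op v) fs) \<subseteq> L" using App by auto
  ultimately show ?case using assms(1) unfolding finite_L_lattice_def by auto
qed

fun bigmt :: "'c \<Rightarrow> 'c form \<Rightarrow> 'c form list \<Rightarrow> 'c form" where
  "bigmt m f [] = f"
| "bigmt m f (g # gs) = App m [f, bigmt m g gs]"

lemma fvars_bigmt: "fvars (bigmt m f gs) = fvars f \<union> (\<Union>g\<in>set gs. fvars g)"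
  by (induction gs arbitrary: f) auto

lemma wf_bigmt: "m \<in> C \<Longrightarrow> ar m = 2 \<Longrightarrow> wf_form C ar f \<Longrightarrow> \<forall>g\<in>set gs. wf_form C ar g
  \<Longrightarrow> wf_form C ar (bigmt m f gs)"
  by (induction gs arbitrary: f) auto

context
  fixes L :: "'a set" and op :: "'c \<Rightarrow> 'a list \<Rightarrow> 'a" and jn mt :: 'c
  assumes lat: "is_lattice L op jn mt"
  and cl: "\<forall>x\<in>L. \<forall>y\<in>L. op mt [x, y] \<in> L"
begin

lemma idem: "x \<in> L \<Longrightarrow> op mt [x, x] = x"
proof -
  assume x: "x \<in> L"
  have "op jn [x, op mt [x, x]] = x" using lat x unfolding is_lattice_def by blast
  moreover have "op mt [x, op jn [x, op mt [x, x]]] = x" using lat x cl unfolding is_lattice_def by blast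
  ultimately show ?thesis by simp
qed

lemma lle_trans: "x \<in> L \<Longrightarrow> y \<in> L \<Longrightarrow> z \<in> L \<Longrightarrow> lle op mt x y \<Longrightarrow> lle op mt y z \<Longrightarrow> lle op mt x z"
  unfolding lle_def using lat unfolding is_lattice_def by metis

lemma lle_glb: "a \<in> L \<Longrightarrow> x \<in> L \<Longrightarrow> y \<in> L \<Longrightarrow> lle op mt a x \<Longrightarrow> lle op mt a y \<Longrightarrow> lle op mt a (op mt [x, y])"
  unfolding lle_def using lat unfolding is_lattice_def by metis

lemma lle_lb1: "x \<in> L \<Longrightarrow> y \<in> L \<Longrightarrow> lle op mt (op mt [x, y]) x"
proof -
  assume x: "x \<in> L" and y: "y \<in> L"
  have "op mt [op mt [x, y], x] = op mt [x, op mt [y, x]]" using lat x y unfolding is_lattice_def by blast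
  also have "\<dots> = op mt [x, op mt [x, y]]" using lat x y unfolding is_lattice_def by metis
  also have "\<dots> = op mt [op mt [x, x], y]" using lat x y unfolding is_lattice_def by metis
  also have "\<dots> = op mt [x, y]" using idem x by simp
  finally show ?thesis unfolding lle_def .
qed

lemma lle_lb2: "x \<in> L \<Longrightarrow> y \<in> L \<Longrightarrow> lle op mt (op mt [x, y]) y"
  using lle_lb1[of y x] lat unfolding is_lattice_def by metis

lemma bigmt_lb:
  "\<forall>g\<in>set (f#gs). eval op v g \<in> L \<Longrightarrow>
   eval op v (bigmt mt f gs) \<in> L \<and> (\<forall>g\<in>set (f#gs). lle op mt (eval op v (bigmt mt f gs)) (eval op v g))"
proof (induction gs arbitrary: f)
  case Nil
  then show ?case using idem unfolding lle_def by auto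
next
  case (Cons g gs)
  let ?B = "eval op v (bigmt mt g gs)"
  have IH: "?B \<in> L" "\<forall>h\<in>set (g#gs). lle op mt ?B (eval op v h)" using Cons by auto
  have f: "eval op v f \<in> L" using Cons.prems by auto
  have e: "eval op v (bigmt mt f (g#gs)) = op mt [eval op v f, ?B]" by simp
  have inL: "op mt [eval op v f, ?B] \<in> L" using cl f IH by auto
  have "lle op mt (op mt [eval op v f, ?B]) (eval op v h)" if "h \<in> set (f#g#gs)" for h
  proof (cases "h = f")
    case True then show ?thesis using lle_lb1 f IH by simp
  next
    case False
    then have h: "h \<in> set (g#gs)" using that by simp
    then have "eval op v h \<in> L" using Cons.prems by auto
    then show ?thesis using lle_trans[OF inL IH(1)] lle_lb2[OF f IH(1)] IH(2) h by blast
  qed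
  then show ?case using e inL by auto
qed

lemma bigmt_glb:
  "\<forall>g\<in>set (f#gs). eval op v g \<in> L \<Longrightarrow> x \<in> L \<Longrightarrow>
   \<forall>g\<in>set (f#gs). lle op mt x (eval op v g) \<Longrightarrow> lle op mt x (eval op v (bigmt mt f gs))"
proof (induction gs arbitrary: f)
  case Nil
  then show ?case by auto
next
  case (Cons g gs)
  have "eval op v (bigmt mt g gs) \<in> L" using bigmt_lb Cons.prems by auto
  moreover have "lle op mt x (eval op v (bigmt mt g gs))" using Cons by auto
  ultimately show ?case using lle_glb Cons.prems by auto
qed

end


lemma ren_out:
  "x \<notin> set rs \<Longrightarrow> (case map_of (zip rs ys) x of None \<Rightarrow> x | Some z \<Rightarrow> z) = x"
  by (cases "map_of (zip rs ys) x") (auto dest: map_of_SomeD set_zip_leftD)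

lemma ren_in:
  "length ys = length rs \<Longrightarrow> x \<in> set rs \<Longrightarrow>
   (case map_of (zip rs ys) x of None \<Rightarrow> x | Some z \<Rightarrow> z) \<in> set ys"
  by (cases "map_of (zip rs ys) x") (auto dest: map_of_SomeD set_zip_rightD simp: map_of_zip_is_None)

theorem lemma2:
  fixes C :: "'c set" and ar :: "'c \<Rightarrow> nat" and pol :: "'c \<Rightarrow> nat \<Rightarrow> bool"
    and jn mt im :: 'c and L :: "'a set" and op :: "'c \<Rightarrow> 'a list \<Rightarrow> 'a" and n :: nat
  assumes "finite_L_lattice C ar pol jn mt im L op"
    and "card L \<le> n"
  shows "interpolation_property C ar L op mt \<longleftrightarrow>
    (\<forall>a b. wf_form C ar a \<and> wf_form C ar b \<and> valid_le L op mt a b \<and>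
           card (right_vars a b) \<le> n \<longrightarrow> (\<exists>i. is_interpolant C ar L op mt a b i))"
proof
  assume "interpolation_property C ar L op mt"
  then show "\<forall>a b. wf_form C ar a \<and> wf_form C ar b \<and> valid_le L op mt a b \<and>
           card (right_vars a b) \<le> n \<longrightarrow> (\<exists>i. is_interpolant C ar L op mt a b i)"
    unfolding interpolation_property_def by blast
next
  assume H: "\<forall>a b. wf_form C ar a \<and> wf_form C ar b \<and> valid_le L op mt a b \<and>
           card (right_vars a b) \<le> n \<longrightarrow> (\<exists>i. is_interpolant C ar L op mt a b i)"
  have FL: "finite_L_lattice C ar pol jn mt im L op" by fact
  have lat: "is_lattice L op jn mt" and mtC: "mt \<in> C" and ar2: "ar mt = 2"
    and finL: "finite L" and neL: "L \<noteq> {}"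
    using FL unfolding finite_L_lattice_def lsignature_def by auto
  have cl: "\<forall>x\<in>L. \<forall>y\<in>L. op mt [x, y] \<in> L"
  proof (intro ballI)
    fix x y assume "x \<in> L" "y \<in> L"
    then show "op mt [x, y] \<in> L" using FL mtC ar2 unfolding finite_L_lattice_def by auto
  qed
  have n1: "n \<ge> 1" using assms(2) finL neL by (metis card_0_eq less_one not_le order_trans)
  show "interpolation_property C ar L op mt"
    unfolding interpolation_property_def
  proof (intro allI impI)
    fix a b assume ab: "wf_form C ar a \<and> wf_form C ar b \<and> valid_le L op mt a b"
    show "\<exists>i. is_interpolant C ar L op mt a b i"
    proof (cases "card (right_vars a b) \<le> n")
      case True then show ?thesis using H ab by blast
    next
      case False
      define R where "R = right_vars a b"
      have finR: "finite R" unfolding R_def right_vars_def using finite_fvars by auto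
      obtain M where M: "\<forall>x\<in>fvars a \<union> fvars b. x < M"
        using finite_nat_set_iff_bounded[of "fvars a \<union> fvars b"] finite_fvars by blast
      define rs where "rs = sorted_list_of_set R"
      have rs: "set rs = R" "distinct rs" unfolding rs_def using finR by auto
      define m where "m = length rs"
      define ren where "ren ys x = (case map_of (zip rs ys) x of None \<Rightarrow> x | Some z \<Rightarrow> z)" for ys x
      define yss where "yss = List.n_lists m [M..<M+n]"
      have yss: "set yss = {ys. length ys = m \<and> set ys \<subseteq> {M..<M+n}}"
        unfolding yss_def set_n_lists by simp
      define ys0 where "ys0 = replicate m M"
      have ys0: "ys0 \<in> set yss" unfolding yss ys0_def using n1 by auto
      define b' where "b' = bigmt mt (rn (ren ys0) b) (map (\<lambda>ys. rn (ren ys) b) yss)"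
      have conj: "set (rn (ren ys0) b # map (\<lambda>ys. rn (ren ys) b) yss) = (\<lambda>ys. rn (ren ys) b) ` set yss"
        using ys0 by auto
      have Rdef: "R = fvars b - fvars a" unfolding R_def right_vars_def by simp
      have ren_a: "ren ys x = x" if "x \<in> fvars a" for ys x
        using ren_out[where rs=rs and ys=ys and x=x] that rs Rdef unfolding ren_def by auto
      have ren_b: "ren ys x \<in> (fvars b - R) \<union> {M..<M+n}" if "x \<in> fvars b" "ys \<in> set yss" for ys x
      proof (cases "x \<in> R")
        case True
        then have "ren ys x \<in> set ys" unfolding ren_def using ren_in[where rs=rs and ys=ys and x=x] that(2) yss rs m_def by auto
        then show ?thesis using that(2) yss by auto
      next
        case False
        then show ?thesis using ren_out[where rs=rs and ys=ys and x=x] that rs unfolding ren_def by auto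
      qed
      have wfb': "wf_form C ar b'" unfolding b'_def
        by (rule wf_bigmt[where C=C and ar=ar and m=mt, OF mtC ar2]) (auto intro: wf_rn simp: ab)
      have fvb': "fvars b' \<subseteq> (fvars b - R) \<union> {M..<M+n}"
      proof
        fix y assume "y \<in> fvars b'"
        then obtain ys where ys: "ys \<in> set yss" "y \<in> fvars (rn (ren ys) b)"
          unfolding b'_def fvars_bigmt using ys0 by auto
        then obtain x where "x \<in> fvars b" "y = ren ys x" unfolding fvars_rn by auto
        then show "y \<in> (fvars b - R) \<union> {M..<M+n}" using ren_b ys(1) by blast
      qed
      have rv: "right_vars a b' \<subseteq> {M..<M+n}"
        unfolding right_vars_def using fvb' Rdef by auto
      have crv: "card (right_vars a b') \<le> n"
        using card_mono[OF _ rv] by simp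
      have evL: "eval op v f \<in> L" if "\<forall>x. v x \<in> L" "wf_form C ar f" for v f
        using eval_in[OF FL] that by blast
      have vab': "valid_le L op mt a b'"
        unfolding valid_le_def
      proof (intro allI impI)
        fix v :: "nat \<Rightarrow> 'a" assume v: "\<forall>x. v x \<in> L"
        have allL: "\<forall>g\<in>set (rn (ren ys0) b # map (\<lambda>ys. rn (ren ys) b) yss). eval op v g \<in> L"
          unfolding conj by (auto intro!: evL[OF v] wf_rn simp: ab)
        have "lle op mt (eval op v a) (eval op v g)"
          if gin: "g \<in> set (rn (ren ys0) b # map (\<lambda>ys. rn (ren ys) b) yss)" for g
        proof -
          obtain ys where g: "g = rn (ren ys) b" using gin conj by auto
          have "lle op mt (eval op (v \<circ> ren ys) a) (eval op (v \<circ> ren ys) b)"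
            using ab v unfolding valid_le_def by auto
          moreover have "eval op (v \<circ> ren ys) a = eval op v a"
            by (rule eval_cong) (simp add: ren_a)
          ultimately show ?thesis unfolding g eval_rn by simp
        qed
        then show "lle op mt (eval op v a) (eval op v b')"
          unfolding b'_def using bigmt_glb[OF lat cl allL] evL[OF v] ab by blast
      qed
      obtain i where i: "is_interpolant C ar L op mt a b' i"
        using H ab wfb' vab' crv by blast
      have fvi: "fvars i \<subseteq> fvars a \<inter> fvars b"
      proof
        fix x assume x: "x \<in> fvars i"
        then have "x \<in> fvars a" "x \<in> fvars b'" using i unfolding is_interpolant_def by auto
        moreover have "x < M" using M \<open>x \<in> fvars a\<close> by auto
        ultimately show "x \<in> fvars a \<inter> fvars b" using fvb' by auto
      qed
      have vib: "valid_le L op mt i b"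
        unfolding valid_le_def
      proof (intro allI impI)
        fix v :: "nat \<Rightarrow> 'a" assume v: "\<forall>x. v x \<in> L"
        obtain ls where ls: "set ls = L" "distinct ls" using finite_distinct_list[OF finL] by blast
        have lenls: "length ls \<le> n" using distinct_card[OF ls(2)] ls(1) assms(2) by simp
        define idx where "idx e = (SOME k. k < length ls \<and> ls ! k = e)" for e
        have idx: "idx e < length ls \<and> ls ! idx e = e" if "e \<in> L" for e
          unfolding idx_def by (rule someI_ex) (use that ls in \<open>auto simp: in_set_conv_nth\<close>)
        define v' where "v' x = (if M \<le> x \<and> x - M < length ls then ls ! (x - M) else v x)" for x
        have v': "\<forall>x. v' x \<in> L" unfolding v'_def using v ls by auto
        define ys where "ys = map (\<lambda>y. M + idx (v y)) rs"
        have ysin: "ys \<in> set yss" unfolding yss ys_def m_def using idx v lenls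
          by (auto, metis add_less_cancel_left less_le_trans)
        have renys: "ren ys x = M + idx (v x)" if "x \<in> R" for x
          unfolding ren_def ys_def map_of_zip_map using that rs by simp
        have agree: "eval op (v' \<circ> ren ys) b = eval op v b"
        proof (rule eval_cong, intro ballI)
          fix x assume x: "x \<in> fvars b"
          show "(v' \<circ> ren ys) x = v x"
          proof (cases "x \<in> R")
            case True
            then show ?thesis using renys idx v unfolding v'_def by auto
          next
            case False
            then have "ren ys x = x" using ren_out[where rs=rs and ys=ys and x=x] rs unfolding ren_def by auto
            moreover have "x < M" using M x by auto
            ultimately show ?thesis unfolding v'_def by auto
          qed
        qed
        have agree_i: "eval op v' i = eval op v i"
        proof (rule eval_cong, intro ballI)
          fix x assume "x \<in> fvars i"
          then have "x < M" using fvi M by auto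
          then show "v' x = v x" unfolding v'_def by auto
        qed
        have wfi: "wf_form C ar i" using i unfolding is_interpolant_def by auto
        have allL: "\<forall>g\<in>set (rn (ren ys0) b # map (\<lambda>ys. rn (ren ys) b) yss). eval op v' g \<in> L"
          unfolding conj by (auto intro!: evL[OF v'] wf_rn simp: ab)
        have g: "rn (ren ys) b \<in> set (rn (ren ys0) b # map (\<lambda>ys. rn (ren ys) b) yss)"
          using ysin by auto
        have 1: "lle op mt (eval op v' i) (eval op v' b')"
          using i v' unfolding is_interpolant_def valid_le_def by auto
        have 2: "lle op mt (eval op v' b') (eval op v' (rn (ren ys) b))"
          using bigmt_lb[OF lat cl allL] g unfolding b'_def by blast
        have b'L: "eval op v' b' \<in> L" using evL[OF v' wfb'] .
        have "lle op mt (eval op v' i) (eval op v' (rn (ren ys) b))"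
          using lle_trans[OF lat cl evL[OF v' wfi] b'L] 1 2 allL g by blast
        then show "lle op mt (eval op v i) (eval op v b)"
          using agree agree_i by (simp add: eval_rn)
      qed
      have "is_interpolant C ar L op mt a b i"
        using i fvi vib unfolding is_interpolant_def by auto
      then show ?thesis by blast
    qed
  qed
qed

end
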